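(* Let $L$ and $M$ be finite-dimensional stem Lie superalgebras over a field of characteristic different from $2,3$. Then $L\sim M$ if and only if $L\cong M$.
   Context: Lie superalgebras: $\mathbb{Z}_2$-graded algebras $L=L_{\bar0}\oplus L_{\bar1}$ with graded skew-symmetric bracket satisfying the graded Jacobi identity; homomorphisms are even bracket-preserving linear maps. $Z(L)$ is the center, $L'=[L,L]$. $L$ is stem if $Z(L)\subseteq L'$. $L\sim M$ (isoclinic) means there are isomorphisms $\varphi:L/Z(L)\to M/Z(M)$ and $\theta:L'\to M'$ with $\theta([l,m])=[k,r]$ whenever $k+Z(M)=\varphi(l+Z(L))$ and $r+Z(M)=\varphi(m+Z(L))$. *)

theory Defs
  imports Complex_Main
begin

text \<open>A Lie superalgebra over a field 'k is modelled on a whole type 'a, with scalar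
multiplication sc, a Z2-grading G (G False = even part, G True = odd part;
Z2 is represented by bool with addition = xor), and a bracket br.\<close>

definition gsign :: "bool \<Rightarrow> bool \<Rightarrow> 'a::ab_group_add \<Rightarrow> 'a" where
  "gsign i j v = (if i \<and> j then - v else v)"

definition lie_superalgebra ::
  "('k::field \<Rightarrow> 'a::ab_group_add \<Rightarrow> 'a) \<Rightarrow> (bool \<Rightarrow> 'a set) \<Rightarrow> ('a \<Rightarrow> 'a \<Rightarrow> 'a) \<Rightarrow> bool" where
  "lie_superalgebra sc G br \<longleftrightarrow>
     vector_space sc \<and>
     module.subspace sc (G False) \<and> module.subspace sc (G True) \<and>
     G False \<inter> G True = {0} \<and>
     (\<forall>x. \<exists>a\<in>G False. \<exists>b\<in>G True. x = a + b) \<and>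
     (\<forall>x y z. br (x + y) z = br x z + br y z) \<and>
     (\<forall>x y z. br x (y + z) = br x y + br x z) \<and>
     (\<forall>c x y. br (sc c x) y = sc c (br x y)) \<and>
     (\<forall>c x y. br x (sc c y) = sc c (br x y)) \<and>
     (\<forall>i j x y. x \<in> G i \<longrightarrow> y \<in> G j \<longrightarrow> br x y \<in> G (i \<noteq> j)) \<and>
     (\<forall>i j x y. x \<in> G i \<longrightarrow> y \<in> G j \<longrightarrow> br x y = - gsign i j (br y x)) \<and>
     (\<forall>i j k x y z. x \<in> G i \<longrightarrow> y \<in> G j \<longrightarrow> z \<in> G k \<longrightarrow>
        gsign i k (br x (br y z)) + gsign j i (br y (br z x)) + gsign k j (br z (br x y)) = 0)"

definition fin_dim :: "('k::field \<Rightarrow> 'a::ab_group_add \<Rightarrow> 'a) \<Rightarrow> bool" where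
  "fin_dim sc \<longleftrightarrow> (\<exists>B. finite B \<and> module.span sc B = UNIV)"

definition lcenter :: "('a \<Rightarrow> 'a \<Rightarrow> 'a::ab_group_add) \<Rightarrow> 'a set" where
  "lcenter br = {z. \<forall>x. br z x = 0}"

definition derived :: "('k::field \<Rightarrow> 'a::ab_group_add \<Rightarrow> 'a) \<Rightarrow> ('a \<Rightarrow> 'a \<Rightarrow> 'a) \<Rightarrow> 'a set" where
  "derived sc br = module.span sc {br x y | x y. True}"

definition stem :: "('k::field \<Rightarrow> 'a::ab_group_add \<Rightarrow> 'a) \<Rightarrow> ('a \<Rightarrow> 'a \<Rightarrow> 'a) \<Rightarrow> bool" where
  "stem sc br \<longleftrightarrow> lcenter br \<subseteq> derived sc br"

definition lsa_isomorphic ::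
  "('k::field \<Rightarrow> 'a::ab_group_add \<Rightarrow> 'a) \<Rightarrow> (bool \<Rightarrow> 'a set) \<Rightarrow> ('a \<Rightarrow> 'a \<Rightarrow> 'a) \<Rightarrow>
   ('k \<Rightarrow> 'b::ab_group_add \<Rightarrow> 'b) \<Rightarrow> (bool \<Rightarrow> 'b set) \<Rightarrow> ('b \<Rightarrow> 'b \<Rightarrow> 'b) \<Rightarrow> bool" where
  "lsa_isomorphic sc1 G1 br1 sc2 G2 br2 \<longleftrightarrow>
     (\<exists>f. bij f \<and> Vector_Spaces.linear sc1 sc2 f \<and>
          (\<forall>x y. f (br1 x y) = br2 (f x) (f y)) \<and>
          (\<forall>i. f ` G1 i \<subseteq> G2 i))"

text \<open>Cosets of a subspace Z; the quotient L/Z is the set of all cosets, with the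
induced operations and grading (G i + Z)/Z.\<close>
definition coset_of :: "'a::ab_group_add set \<Rightarrow> 'a \<Rightarrow> 'a set" where
  "coset_of Z x = {x + z | z. z \<in> Z}"

definition isoclinic ::
  "('k::field \<Rightarrow> 'a::ab_group_add \<Rightarrow> 'a) \<Rightarrow> (bool \<Rightarrow> 'a set) \<Rightarrow> ('a \<Rightarrow> 'a \<Rightarrow> 'a) \<Rightarrow>
   ('k \<Rightarrow> 'b::ab_group_add \<Rightarrow> 'b) \<Rightarrow> (bool \<Rightarrow> 'b set) \<Rightarrow> ('b \<Rightarrow> 'b \<Rightarrow> 'b) \<Rightarrow> bool" where
  "isoclinic sc1 G1 br1 sc2 G2 br2 \<longleftrightarrow>
     (let cL = coset_of (lcenter br1); cM = coset_of (lcenter br2);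
          D1 = derived sc1 br1; D2 = derived sc2 br2 in
     \<exists>(\<phi> :: 'a set \<Rightarrow> 'b set) (\<theta> :: 'a \<Rightarrow> 'b).
       \<comment> \<open>phi: isomorphism of quotient Lie superalgebras\<close>
       bij_betw \<phi> (range cL) (range cM) \<and>
       (\<forall>x y u v. \<phi> (cL x) = cM u \<longrightarrow> \<phi> (cL y) = cM v \<longrightarrow>
          \<phi> (cL (x + y)) = cM (u + v) \<and> \<phi> (cL (br1 x y)) = cM (br2 u v)) \<and>
       (\<forall>c x u. \<phi> (cL x) = cM u \<longrightarrow> \<phi> (cL (sc1 c x)) = cM (sc2 c u)) \<and>
       (\<forall>i x. x \<in> G1 i \<longrightarrow> (\<exists>u\<in>G2 i. \<phi> (cL x) = cM u)) \<and>
       \<comment> \<open>theta: isomorphism of derived subalgebras\<close>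
       bij_betw \<theta> D1 D2 \<and>
       (\<forall>x\<in>D1. \<forall>y\<in>D1. \<theta> (x + y) = \<theta> x + \<theta> y \<and> \<theta> (br1 x y) = br2 (\<theta> x) (\<theta> y)) \<and>
       (\<forall>c. \<forall>x\<in>D1. \<theta> (sc1 c x) = sc2 c (\<theta> x)) \<and>
       (\<forall>i. \<theta> ` (D1 \<inter> G1 i) \<subseteq> G2 i) \<and>
       \<comment> \<open>compatibility\<close>
       (\<forall>l m k r. \<phi> (cL l) = cM k \<longrightarrow> \<phi> (cL m) = cM r \<longrightarrow> \<theta> (br1 l m) = br2 k r))"

end

theory Submission
  imports Defs
begin


lemma lsa_D:
  assumes "lie_superalgebra sc G br"
  shows "vector_space sc" "module.subspace sc (G False)" "module.subspace sc (G True)"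
    "G False \<inter> G True = {0}"
    "\<forall>x. \<exists>a\<in>G False. \<exists>b\<in>G True. x = a + b"
    "\<forall>x y z. br (x + y) z = br x z + br y z"
    "\<forall>x y z. br x (y + z) = br x y + br x z"
    "\<forall>c x y. br (sc c x) y = sc c (br x y)"
    "\<forall>c x y. br x (sc c y) = sc c (br x y)"
    "\<forall>i j x y. x \<in> G i \<longrightarrow> y \<in> G j \<longrightarrow> br x y \<in> G (i \<noteq> j)"
    "\<forall>i j x y. x \<in> G i \<longrightarrow> y \<in> G j \<longrightarrow> br x y = - gsign i j (br y x)"
  using assms unfolding lie_superalgebra_def apply -
  apply (elim conjE, assumption)+
  done

lemma lsa_vs: "lie_superalgebra sc G br \<Longrightarrow> vector_space sc"
  by (rule lsa_D(1))

lemma lsa_sub: "lie_superalgebra sc G br \<Longrightarrow> module.subspace sc (G i)"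
  using lsa_D(2,3) by (cases i) auto

lemma lsa_inter: "lie_superalgebra sc G br \<Longrightarrow> i \<noteq> j \<Longrightarrow> G i \<inter> G j = {0}"
  using lsa_D(4) by (cases i; cases j) auto

lemma lsa_dec: "lie_superalgebra sc G br \<Longrightarrow> \<exists>a\<in>G False. \<exists>b\<in>G True. x = a + b"
  using lsa_D(5) by blast

lemma lsa_add1: "lie_superalgebra sc G br \<Longrightarrow> br (x + y) z = br x z + br y z"
  using lsa_D(6) by blast
lemma lsa_add2: "lie_superalgebra sc G br \<Longrightarrow> br x (y + z) = br x y + br x z"
  using lsa_D(7) by blast
lemma lsa_sc1: "lie_superalgebra sc G br \<Longrightarrow> br (sc c x) y = sc c (br x y)"
  using lsa_D(8) by blast
lemma lsa_grade: "lie_superalgebra sc G br \<Longrightarrow> x \<in> G i \<Longrightarrow> y \<in> G j \<Longrightarrow> br x y \<in> G (i \<noteq> j)"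
  using lsa_D(10) by blast
lemma lsa_skew: "lie_superalgebra sc G br \<Longrightarrow> x \<in> G i \<Longrightarrow> y \<in> G j \<Longrightarrow> br x y = - gsign i j (br y x)"
  using lsa_D(11) by blast

lemma lsa_zero1: assumes "lie_superalgebra sc G br" shows "br 0 y = 0"
proof -
  have "br (0+0) y = br 0 y + br 0 y" by (rule lsa_add1[OF assms])
  then show ?thesis by simp
qed
lemma lsa_zero2: assumes "lie_superalgebra sc G br" shows "br y 0 = 0"
proof -
  have "br y (0+0) = br y 0 + br y 0" by (rule lsa_add2[OF assms])
  then show ?thesis by simp
qed
lemma lsa_neg1: assumes "lie_superalgebra sc G br" shows "br (- x) y = - br x y"
proof -
  have "br (-x + x) y = br (-x) y + br x y" by (rule lsa_add1[OF assms])
  then show ?thesis using lsa_zero1[OF assms] by (simp add: eq_neg_iff_add_eq_0)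
qed
lemma lsa_neg2: assumes "lie_superalgebra sc G br" shows "br y (- x) = - br y x"
proof -
  have "br y (-x + x) = br y (-x) + br y x" by (rule lsa_add2[OF assms])
  then show ?thesis using lsa_zero2[OF assms] by (simp add: eq_neg_iff_add_eq_0)
qed
lemma lsa_diff1: assumes "lie_superalgebra sc G br" shows "br (x - z) y = br x y - br z y"
  using lsa_add1[OF assms, of x "-z" y] lsa_neg1[OF assms] by simp
lemma lsa_diff2: assumes "lie_superalgebra sc G br" shows "br y (x - z) = br y x - br y z"
  using lsa_add2[OF assms, of y x "-z"] lsa_neg2[OF assms] by simp

lemma center_0: "lie_superalgebra sc G br \<Longrightarrow> 0 \<in> lcenter br"
  by (simp add: lcenter_def lsa_zero1)
lemma center_add: "lie_superalgebra sc G br \<Longrightarrow> a \<in> lcenter br \<Longrightarrow> b \<in> lcenter br \<Longrightarrow> a + b \<in> lcenter br"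
  by (simp add: lcenter_def lsa_add1)
lemma center_neg: "lie_superalgebra sc G br \<Longrightarrow> a \<in> lcenter br \<Longrightarrow> - a \<in> lcenter br"
  by (simp add: lcenter_def lsa_neg1)
lemma center_sc: "lie_superalgebra sc G br \<Longrightarrow> a \<in> lcenter br \<Longrightarrow> sc c a \<in> lcenter br"
proof -
  assume L: "lie_superalgebra sc G br" and a: "a \<in> lcenter br"
  interpret vector_space sc by (rule lsa_vs[OF L])
  show ?thesis using a by (simp add: lcenter_def lsa_sc1[OF L])
qed

lemma coset_eq:
  assumes "0 \<in> Z" "\<And>a b. a\<in>Z \<Longrightarrow> b\<in>Z \<Longrightarrow> a+b \<in> Z" "\<And>a. a\<in>Z \<Longrightarrow> -a \<in> Z"
  shows "coset_of Z x = coset_of Z y \<longleftrightarrow> x - y \<in> Z"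
proof
  assume h: "coset_of Z x = coset_of Z y"
  have "x \<in> coset_of Z x" unfolding coset_of_def using assms(1) by force
  then have "x \<in> coset_of Z y" using h by simp
  then obtain z where "z \<in> Z" "x = y + z" unfolding coset_of_def by blast
  then show "x - y \<in> Z" by simp
next
  assume w: "x - y \<in> Z"
  show "coset_of Z x = coset_of Z y"
  proof (rule set_eqI, rule iffI)
    fix v assume "v \<in> coset_of Z x"
    then obtain z where z: "z \<in> Z" "v = x + z" unfolding coset_of_def by blast
    then have "v = y + ((x - y) + z)" by simp
    then show "v \<in> coset_of Z y" unfolding coset_of_def using assms(2)[OF w z(1)] by blast
  next
    fix v assume "v \<in> coset_of Z y"
    then obtain z where z: "z \<in> Z" "v = y + z" unfolding coset_of_def by blast
    then have "v = x + (- (x - y) + z)" by simp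
    then show "v \<in> coset_of Z x" unfolding coset_of_def using assms(2)[OF assms(3)[OF w] z(1)] by blast
  qed
qed

lemma center_coset_eq: "lie_superalgebra sc G br \<Longrightarrow>
   coset_of (lcenter br) x = coset_of (lcenter br) y \<longleftrightarrow> x - y \<in> lcenter br"
  by (rule coset_eq) (auto intro: center_0 center_add center_neg)

lemma gsign0: "gsign i j 0 = 0" by (simp add: gsign_def)

lemma center_right:
  assumes L: "lie_superalgebra sc G br" and z: "z \<in> lcenter br"
  shows "br x z = 0"
proof -
  interpret vector_space sc by (rule lsa_vs[OF L])
  obtain c0 c1 where c: "c0 \<in> G False" "c1 \<in> G True" "z = c0 + c1" using lsa_dec[OF L] by blast
  have hom: "br c0 b = 0 \<and> br c1 b = 0" if b: "b \<in> G k" for b k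
  proof -
    have "br z b = 0" using z by (simp add: lcenter_def)
    then have s: "br c0 b + br c1 b = 0" using c lsa_add1[OF L] by simp
    have g0: "br c0 b \<in> G k" using lsa_grade[OF L c(1) b] by simp
    have g1: "br c1 b \<in> G (\<not> k)" using lsa_grade[OF L c(2) b] by simp
    have "br c0 b = - br c1 b" using s by (simp add: eq_neg_iff_add_eq_0)
    then have "br c0 b \<in> G (\<not> k)" using g1 subspace_neg[OF lsa_sub[OF L]] by simp
    then have "br c0 b = 0" using g0 lsa_inter[OF L, of k "\<not> k"] by auto
    then show ?thesis using s by simp
  qed
  have hom2: "br a c = 0" if a: "a \<in> G i" and cc: "c = c0 \<or> c = c1" for a c i
  proof -
    obtain j where j: "c \<in> G j" using cc c by blast
    have "br a c = - gsign i j (br c a)" by (rule lsa_skew[OF L a j])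
    also have "br c a = 0" using hom[OF a] cc by auto
    finally show ?thesis by (simp add: gsign0)
  qed
  obtain a0 a1 where a: "a0 \<in> G False" "a1 \<in> G True" "x = a0 + a1" using lsa_dec[OF L] by blast
  have "br x z = br a0 c0 + br a0 c1 + (br a1 c0 + br a1 c1)"
    using a c by (simp add: lsa_add1[OF L] lsa_add2[OF L])
  then show ?thesis using hom2 a by (simp)
qed

lemma br_cong:
  assumes L: "lie_superalgebra sc G br" and "a - a' \<in> lcenter br" "b - b' \<in> lcenter br"
  shows "br a b = br a' b'"
proof -
  have "br a b - br a' b = br (a - a') b" by (simp add: lsa_diff1[OF L])
  also have "\<dots> = 0" using assms(2) by (simp add: lcenter_def)
  finally have 1: "br a b = br a' b" by simp
  have "br a' b - br a' b' = br a' (b - b')" by (simp add: lsa_diff2[OF L])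
  also have "\<dots> = 0" using center_right[OF L assms(3)] .
  finally show ?thesis using 1 by simp
qed

lemma derived_graded:
  assumes L: "lie_superalgebra sc G br" and d: "d \<in> derived sc br"
  shows "\<exists>a\<in>derived sc br \<inter> G False. \<exists>b\<in>derived sc br \<inter> G True. d = a + b"
proof -
  interpret vector_space sc by (rule lsa_vs[OF L])
  let ?D = "derived sc br"
  let ?P = "{d. \<exists>a\<in>?D \<inter> G False. \<exists>b\<in>?D \<inter> G True. d = a + b}"
  have sD: "subspace ?D" unfolding derived_def by simp
  have sF: "subspace (?D \<inter> G False)" using subspace_inter[OF sD lsa_sub[OF L]] .
  have sT: "subspace (?D \<inter> G True)" using subspace_inter[OF sD lsa_sub[OF L]] .
  have "subspace ?P"
  proof (rule subspaceI)
    show "0 \<in> ?P" using subspace_0[OF sF] subspace_0[OF sT] by force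
  next
    fix x y assume "x \<in> ?P" "y \<in> ?P"
    then obtain a b a' b' where "a \<in> ?D \<inter> G False" "b \<in> ?D \<inter> G True" "x = a + b"
      "a' \<in> ?D \<inter> G False" "b' \<in> ?D \<inter> G True" "y = a' + b'" by blast
    moreover have "x + y = (a + a') + (b + b')" using \<open>x = a + b\<close> \<open>y = a' + b'\<close> by (simp add: algebra_simps)
    ultimately show "x + y \<in> ?P" using subspace_add[OF sF] subspace_add[OF sT] by blast
  next
    fix c x assume "x \<in> ?P"
    then obtain a b where "a \<in> ?D \<inter> G False" "b \<in> ?D \<inter> G True" "x = a + b" by blast
    moreover have "sc c x = sc c a + sc c b" using \<open>x = a + b\<close> by (simp add: scale_right_distrib)
    ultimately show "sc c x \<in> ?P" using subspace_scale[OF sF] subspace_scale[OF sT] by blast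
  qed
  moreover have "{br x y | x y. True} \<subseteq> ?P"
  proof safe
    fix x y
    obtain a0 a1 where a: "a0 \<in> G False" "a1 \<in> G True" "x = a0 + a1" using lsa_dec[OF L] by blast
    obtain b0 b1 where b: "b0 \<in> G False" "b1 \<in> G True" "y = b0 + b1" using lsa_dec[OF L] by blast
    have e: "br x y = (br a0 b0 + br a1 b1) + (br a0 b1 + br a1 b0)"
      using a b by (simp add: lsa_add1[OF L] lsa_add2[OF L] algebra_simps)
    have inD: "br u v \<in> ?D" for u v unfolding derived_def by (rule span_base) blast
    have "br a0 b0 + br a1 b1 \<in> ?D \<inter> G False"
      using subspace_add[OF sF] inD lsa_grade[OF L a(1) b(1)] lsa_grade[OF L a(2) b(2)] by simp
    moreover have "br a0 b1 + br a1 b0 \<in> ?D \<inter> G True"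
      using subspace_add[OF sT] inD lsa_grade[OF L a(1) b(2)] lsa_grade[OF L a(2) b(1)] by simp
    ultimately show "\<exists>a\<in>?D \<inter> G False. \<exists>b\<in>?D \<inter> G True. br x y = a + b" using e by blast
  qed
  ultimately have "span {br x y | x y. True} \<subseteq> ?P" by (rule span_minimal[rotated])
  then show ?thesis using d unfolding derived_def by blast
qed



lemma bwd:
  assumes L1: "lie_superalgebra sc1 G1 br1" and L2: "lie_superalgebra sc2 G2 br2"
    and iso: "lsa_isomorphic sc1 G1 br1 sc2 G2 br2"
  shows "isoclinic sc1 G1 br1 sc2 G2 br2"
proof -
  interpret V1: vector_space sc1 by (rule lsa_vs[OF L1])
  interpret V2: vector_space sc2 by (rule lsa_vs[OF L2])
  interpret VP: vector_space_pair sc1 sc2 ..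
  obtain f where fb: "bij f" and fl: "Vector_Spaces.linear sc1 sc2 f"
    and fbr: "\<And>x y. f (br1 x y) = br2 (f x) (f y)" and fg: "\<And>i. f ` G1 i \<subseteq> G2 i"
    using iso unfolding lsa_isomorphic_def by blast
  have fadd: "\<And>x y. f (x + y) = f x + f y" using fl unfolding Vector_Spaces.linear_iff by blast
  have fsc: "\<And>c x. f (sc1 c x) = sc2 c (f x)" using fl unfolding Vector_Spaces.linear_iff by blast
  have f0: "f 0 = 0" using VP.linear_0[OF fl] .
  have finj: "inj f" and fsurj: "surj f" using fb unfolding bij_def by auto
  define Z1 where "Z1 = lcenter br1"
  define Z2 where "Z2 = lcenter br2"
  define cL where "cL = coset_of Z1"
  define cM where "cM = coset_of Z2"
  define D1 where "D1 = derived sc1 br1"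
  define D2 where "D2 = derived sc2 br2"
  define \<phi> where "\<phi> = (\<lambda>S. f ` S)"
  have Zimg: "f ` Z1 = Z2"
  proof
    show "f ` Z1 \<subseteq> Z2"
    proof
      fix w assume "w \<in> f ` Z1"
      then obtain z where z: "z \<in> Z1" "w = f z" by blast
      have "br2 w y = 0" for y
      proof -
        obtain x where "y = f x" using fsurj by (metis surj_f_inv_f)
        then have "br2 w y = f (br1 z x)" using z fbr by simp
        also have "\<dots> = 0" using z f0 unfolding Z1_def lcenter_def by simp
        finally show ?thesis .
      qed
      then show "w \<in> Z2" unfolding Z2_def lcenter_def by simp
    qed
  next
    show "Z2 \<subseteq> f ` Z1"
    proof
      fix w assume w: "w \<in> Z2"
      obtain z where z: "w = f z" using fsurj by (metis surj_f_inv_f)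
      have "br1 z x = 0" for x
      proof -
        have "f (br1 z x) = br2 w (f x)" using z fbr by simp
        also have "\<dots> = 0" using w unfolding Z2_def lcenter_def by simp
        finally show ?thesis using finj f0 by (metis injD)
      qed
      then show "w \<in> f ` Z1" using z unfolding Z1_def lcenter_def by blast
    qed
  qed
  have phic: "\<phi> (cL x) = cM (f x)" for x
  proof -
    have "f ` {x + z |z. z \<in> Z1} = {f x + w |w. w \<in> f ` Z1}" using fadd by (auto simp del: fadd) (metis (mono_tags, lifting) image_eqI mem_Collect_eq)
    then show ?thesis unfolding \<phi>_def cL_def cM_def coset_of_def using Zimg by simp
  qed
  have ceq: "cM a = cM b \<longleftrightarrow> a - b \<in> Z2" for a b
    unfolding cM_def Z2_def by (rule center_coset_eq[OF L2])
  have Z2add: "a \<in> Z2 \<Longrightarrow> b \<in> Z2 \<Longrightarrow> a + b \<in> Z2" for a b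
    unfolding Z2_def by (rule center_add[OF L2])
  have Z2sc: "a \<in> Z2 \<Longrightarrow> sc2 c a \<in> Z2" for a c
    unfolding Z2_def by (rule center_sc[OF L2])
  have brc: "a - a' \<in> Z2 \<Longrightarrow> b - b' \<in> Z2 \<Longrightarrow> br2 a b = br2 a' b'" for a a' b b'
    unfolding Z2_def by (rule br_cong[OF L2])
  have Dimg: "f ` D1 = D2"
  proof -
    have "f ` {br1 x y | x y. True} = {br2 x y | x y. True}"
    proof
      show "f ` {br1 x y | x y. True} \<subseteq> {br2 x y | x y. True}" using fbr by auto
      show "{br2 x y | x y. True} \<subseteq> f ` {br1 x y | x y. True}"
      proof safe
        fix x y
        obtain a where a: "x = f a" using fsurj by (metis surj_f_inv_f)
        obtain b where b: "y = f b" using fsurj by (metis surj_f_inv_f)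
        have "br2 x y = f (br1 a b)" using a b fbr by simp
        then show "br2 x y \<in> f ` {br1 x y | x y. True}" by blast
      qed
    qed
    then show ?thesis unfolding D1_def D2_def derived_def
      using VP.linear_span_image[OF fl] by metis
  qed
  have c1: "bij_betw \<phi> (range cL) (range cM)"
  proof (rule bij_betw_imageI)
    show "inj_on \<phi> (range cL)" unfolding \<phi>_def inj_on_def using finj by (simp add: inj_image_eq_iff)
    show "\<phi> ` range cL = range cM"
    proof safe
      fix x show "\<phi> (cL x) \<in> range cM" using phic by simp
    next
      fix y
      obtain x where "y = f x" using fsurj by (metis surj_f_inv_f)
      then show "cM y \<in> \<phi> ` range cL" using phic by (metis rangeI image_eqI)
    qed
  qed
  have c2: "\<forall>x y u v. \<phi> (cL x) = cM u \<longrightarrow> \<phi> (cL y) = cM v \<longrightarrow>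
          \<phi> (cL (x + y)) = cM (u + v) \<and> \<phi> (cL (br1 x y)) = cM (br2 u v)"
  proof (intro allI impI)
    fix x y u v assume "\<phi> (cL x) = cM u" "\<phi> (cL y) = cM v"
    then have xu: "f x - u \<in> Z2" and yv: "f y - v \<in> Z2" using phic ceq by auto
    have e: "f (x + y) - (u + v) = (f x - u) + (f y - v)" using fadd by (simp add: algebra_simps)
    have "f (x + y) - (u + v) \<in> Z2" by (subst e) (rule Z2add[OF xu yv])
    then have 1: "\<phi> (cL (x + y)) = cM (u + v)" using phic ceq by simp
    have "f (br1 x y) = br2 u v" using fbr brc[OF xu yv] by simp
    then have 2: "\<phi> (cL (br1 x y)) = cM (br2 u v)" using phic by simp
    show "\<phi> (cL (x + y)) = cM (u + v) \<and> \<phi> (cL (br1 x y)) = cM (br2 u v)" using 1 2 by blast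
  qed
  have c3: "\<forall>c x u. \<phi> (cL x) = cM u \<longrightarrow> \<phi> (cL (sc1 c x)) = cM (sc2 c u)"
  proof (intro allI impI)
    fix c x u assume "\<phi> (cL x) = cM u"
    then have xu: "f x - u \<in> Z2" using phic ceq by auto
    have e: "f (sc1 c x) - sc2 c u = sc2 c (f x - u)" using fsc by (simp add: V2.scale_right_diff_distrib)
    have "f (sc1 c x) - sc2 c u \<in> Z2" by (subst e) (rule Z2sc[OF xu])
    then show "\<phi> (cL (sc1 c x)) = cM (sc2 c u)" using phic ceq by simp
  qed
  have c4: "\<forall>i x. x \<in> G1 i \<longrightarrow> (\<exists>u\<in>G2 i. \<phi> (cL x) = cM u)"
    using fg phic by blast
  have c5: "bij_betw f D1 D2" using Dimg finj inj_on_subset[OF finj subset_UNIV] by (simp add: bij_betw_def)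
  have c6: "\<forall>x\<in>D1. \<forall>y\<in>D1. f (x + y) = f x + f y \<and> f (br1 x y) = br2 (f x) (f y)"
    using fadd fbr by simp
  have c7: "\<forall>c. \<forall>x\<in>D1. f (sc1 c x) = sc2 c (f x)" using fsc by simp
  have c8: "\<forall>i. f ` (D1 \<inter> G1 i) \<subseteq> G2 i" using fg by blast
  have c9: "\<forall>l m k r. \<phi> (cL l) = cM k \<longrightarrow> \<phi> (cL m) = cM r \<longrightarrow> f (br1 l m) = br2 k r"
  proof (intro allI impI)
    fix l m k r assume "\<phi> (cL l) = cM k" "\<phi> (cL m) = cM r"
    then have xu: "f l - k \<in> Z2" and yv: "f m - r \<in> Z2" using phic ceq by auto
    show "f (br1 l m) = br2 k r" using fbr brc[OF xu yv] by simp
  qed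
  show ?thesis unfolding isoclinic_def Let_def
    apply (rule exI[of _ \<phi>], rule exI[of _ f])
    using c1 c2 c3 c4 c5 c6 c7 c8 c9 unfolding cL_def cM_def Z1_def Z2_def D1_def D2_def
    by blast
qed



lemma fwd:
  assumes L1: "lie_superalgebra sc1 G1 br1" and S1: "stem sc1 br1"
    and L2: "lie_superalgebra sc2 G2 br2" and S2: "stem sc2 br2"
    and isoc: "isoclinic sc1 G1 br1 sc2 G2 br2"
  shows "lsa_isomorphic sc1 G1 br1 sc2 G2 br2"
proof -
  interpret V1: vector_space sc1 by (rule lsa_vs[OF L1])
  interpret V2: vector_space sc2 by (rule lsa_vs[OF L2])
  interpret VP: vector_space_pair sc1 sc2 ..
  define Z1 where "Z1 = lcenter br1"
  define Z2 where "Z2 = lcenter br2"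
  define cL where "cL = coset_of Z1"
  define cM where "cM = coset_of Z2"
  define D1 where "D1 = derived sc1 br1"
  define D2 where "D2 = derived sc2 br2"
  obtain \<phi> \<theta> where
    phib: "bij_betw \<phi> (range cL) (range cM)" and
    phih: "\<forall>x y u v. \<phi> (cL x) = cM u \<longrightarrow> \<phi> (cL y) = cM v \<longrightarrow>
          \<phi> (cL (x + y)) = cM (u + v) \<and> \<phi> (cL (br1 x y)) = cM (br2 u v)" and
    phis: "\<forall>c x u. \<phi> (cL x) = cM u \<longrightarrow> \<phi> (cL (sc1 c x)) = cM (sc2 c u)" and
    phig: "\<forall>i x. x \<in> G1 i \<longrightarrow> (\<exists>u\<in>G2 i. \<phi> (cL x) = cM u)" and
    thb: "bij_betw \<theta> D1 D2" and
    thh: "\<forall>x\<in>D1. \<forall>y\<in>D1. \<theta> (x + y) = \<theta> x + \<theta> y \<and> \<theta> (br1 x y) = br2 (\<theta> x) (\<theta> y)" and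
    ths: "\<forall>c. \<forall>x\<in>D1. \<theta> (sc1 c x) = sc2 c (\<theta> x)" and
    thg: "\<forall>i. \<theta> ` (D1 \<inter> G1 i) \<subseteq> G2 i" and
    comp: "\<forall>l m k r. \<phi> (cL l) = cM k \<longrightarrow> \<phi> (cL m) = cM r \<longrightarrow> \<theta> (br1 l m) = br2 k r"
    using isoc[unfolded isoclinic_def Let_def, folded Z1_def Z2_def D1_def D2_def, folded cL_def cM_def]
    by (elim exE conjE) (rule that; assumption)
  have ceq1: "cL a = cL b \<longleftrightarrow> a - b \<in> Z1" for a b
    unfolding cL_def Z1_def by (rule center_coset_eq[OF L1])
  have ceq2: "cM a = cM b \<longleftrightarrow> a - b \<in> Z2" for a b
    unfolding cM_def Z2_def by (rule center_coset_eq[OF L2])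
  have Z1D: "Z1 \<subseteq> D1" using S1 unfolding stem_def Z1_def D1_def .
  have Z2D: "Z2 \<subseteq> D2" using S2 unfolding stem_def Z2_def D2_def .
  have sD1: "V1.subspace D1" unfolding D1_def derived_def by simp
  have phiex: "\<exists>u. \<phi> (cL x) = cM u" for x
    using phib unfolding bij_betw_def by blast
  have phi0: "\<phi> (cL 0) = cM 0"
  proof -
    obtain u where u: "\<phi> (cL 0) = cM u" using phiex by blast
    then have "\<phi> (cL (0 + 0)) = cM (u + u)" using phih by blast
    then have "cM u = cM (u + u)" using u by simp
    then have "u - (u + u) \<in> Z2" using ceq2 by blast
    then have "- u \<in> Z2" by simp
    then have "u \<in> Z2" using center_neg[OF L2, of "- u"] unfolding Z2_def by simp
    then have "cM u = cM 0" using ceq2 by simp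
    then show ?thesis using u by simp
  qed
  have th0: "\<theta> 0 = 0"
  proof -
    have "0 \<in> D1" using V1.subspace_0[OF sD1] .
    then have "\<theta> (0 + 0) = \<theta> 0 + \<theta> 0" using thh by blast
    then show ?thesis by simp
  qed
  have phith: "\<phi> (cL d) = cM (\<theta> d)" if d: "d \<in> D1" for d
  proof -
    let ?P = "{d \<in> D1. \<phi> (cL d) = cM (\<theta> d)}"
    have "V1.subspace ?P"
    proof (rule V1.subspaceI)
      show "0 \<in> ?P" using V1.subspace_0[OF sD1] phi0 th0 by simp
    next
      fix x y assume "x \<in> ?P" "y \<in> ?P"
      then show "x + y \<in> ?P" using phih thh V1.subspace_add[OF sD1] by auto
    next
      fix c x assume "x \<in> ?P"
      then show "sc1 c x \<in> ?P" using phis ths V1.subspace_scale[OF sD1] by auto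
    qed
    moreover have "{br1 x y | x y. True} \<subseteq> ?P"
    proof (rule subsetI)
      fix w assume "w \<in> {br1 x y | x y. True}"
      then obtain x y where w: "w = br1 x y" by blast
      have inD: "br1 x y \<in> D1" unfolding D1_def derived_def by (rule V1.span_base) blast
      obtain u where u: "\<phi> (cL x) = cM u" using phiex by blast
      obtain v where v: "\<phi> (cL y) = cM v" using phiex by blast
      have "\<phi> (cL (br1 x y)) = cM (br2 u v)" using phih u v by blast
      moreover have "\<theta> (br1 x y) = br2 u v" using comp u v by blast
      ultimately show "w \<in> ?P" using inD w by simp
    qed
    ultimately have "V1.span {br1 x y | x y. True} \<subseteq> ?P" by (rule V1.span_minimal[rotated])
    then show ?thesis using d unfolding D1_def derived_def by blast
  qed
  define H1 where "H1 = G1 False \<union> G1 True"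
  have e0: "{} \<subseteq> D1 \<inter> H1" by simp
  have i0: "V1.independent {}" by (rule V1.independent_empty)
  obtain B where B0: "{} \<subseteq> B" and B: "B \<subseteq> D1 \<inter> H1" "V1.independent B" "D1 \<inter> H1 \<subseteq> V1.span B"
    by (rule V1.maximal_independent_subset_extend[OF e0 i0])
  have D1B: "D1 \<subseteq> V1.span B"
  proof
    fix d assume "d \<in> D1"
    then obtain a b where ab: "a \<in> D1 \<inter> G1 False" "b \<in> D1 \<inter> G1 True" "d = a + b"
      using derived_graded[OF L1] unfolding D1_def by blast
    have "a \<in> V1.span B" "b \<in> V1.span B" using ab B(3) unfolding H1_def by auto
    then show "d \<in> V1.span B" using ab V1.span_add by simp
  qed
  obtain C where C: "B \<subseteq> C" "C \<subseteq> H1" "V1.independent C" "H1 \<subseteq> V1.span C"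
  proof (rule V1.maximal_independent_subset_extend[of B H1])
    show "B \<subseteq> H1" using B(1) by blast
    show "V1.independent B" by (rule B(2))
  qed
  have spanC: "V1.span C = UNIV"
  proof (rule set_eqI, rule iffI)
    fix x show "x \<in> V1.span C \<Longrightarrow> x \<in> UNIV" by simp
  next
    fix x
    obtain a b where "a \<in> G1 False" "b \<in> G1 True" "x = a + b" using lsa_dec[OF L1] by blast
    then show "x \<in> V1.span C" using C(4) V1.span_add[of a C b] unfolding H1_def by auto
  
  qed
  define g where "g b = (if b \<in> D1 then \<theta> b
      else SOME u. (\<forall>i. b \<in> G1 i \<longrightarrow> u \<in> G2 i) \<and> \<phi> (cL b) = cM u)" for b
  have gC: "\<phi> (cL b) = cM (g b) \<and> (\<forall>i. b \<in> G1 i \<longrightarrow> g b \<in> G2 i)" if b: "b \<in> C" for b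
  proof (cases "b \<in> D1")
    case True
    have "\<forall>i. b \<in> G1 i \<longrightarrow> \<theta> b \<in> G2 i" using thg True by blast
    then show ?thesis using phith[OF True] True unfolding g_def by simp
  next
    case False
    obtain i where i: "b \<in> G1 i" using b C(2) unfolding H1_def by auto
    obtain u where u: "u \<in> G2 i" "\<phi> (cL b) = cM u" using phig i by blast
    have "\<forall>j. b \<in> G1 j \<longrightarrow> u \<in> G2 j"
    proof (intro allI impI)
      fix j assume j: "b \<in> G1 j"
      show "u \<in> G2 j"
      proof (cases "j = i")
        case True then show ?thesis using u by simp
      next
        case False
        then have "b = 0" using lsa_inter[OF L1 False] i j by auto
        then show ?thesis using V1.subspace_0[OF sD1] \<open>b \<notin> D1\<close> by simp
      qed
    qed
    then have "\<exists>u. (\<forall>i. b \<in> G1 i \<longrightarrow> u \<in> G2 i) \<and> \<phi> (cL b) = cM u" using u by blast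
    then have "(\<forall>i. b \<in> G1 i \<longrightarrow> (SOME u. (\<forall>i. b \<in> G1 i \<longrightarrow> u \<in> G2 i) \<and> \<phi> (cL b) = cM u) \<in> G2 i)
       \<and> \<phi> (cL b) = cM (SOME u. (\<forall>i. b \<in> G1 i \<longrightarrow> u \<in> G2 i) \<and> \<phi> (cL b) = cM u)"
      by (rule someI_ex)
    then have "(\<forall>i. b \<in> G1 i \<longrightarrow> g b \<in> G2 i) \<and> \<phi> (cL b) = cM (g b)"
      unfolding g_def using False by simp
    then show ?thesis by blast
  qed
  define f where "f = VP.construct C g"
  have fl: "Vector_Spaces.linear sc1 sc2 f" unfolding f_def by (rule VP.linear_construct[OF C(3)])
  have fC: "b \<in> C \<Longrightarrow> f b = g b" for b unfolding f_def by (rule VP.construct_basis[OF C(3)])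
  have fadd: "\<And>x y. f (x + y) = f x + f y" using fl unfolding Vector_Spaces.linear_iff by blast
  have fsc: "\<And>c x. f (sc1 c x) = sc2 c (f x)" using fl unfolding Vector_Spaces.linear_iff by blast
  have f0: "f 0 = 0" using VP.linear_0[OF fl] .
  have fdiff: "f (x - y) = f x - f y" for x y using VP.linear_diff[OF fl] .
  have phif: "\<phi> (cL x) = cM (f x)" for x
  proof -
    let ?P = "{x. \<phi> (cL x) = cM (f x)}"
    have "V1.subspace ?P"
    proof (rule V1.subspaceI)
      show "0 \<in> ?P" using phi0 f0 by simp
    next
      fix x y assume "x \<in> ?P" "y \<in> ?P"
      then show "x + y \<in> ?P" using phih fadd by auto
    next
      fix c x assume "x \<in> ?P"
      then show "sc1 c x \<in> ?P" using phis fsc by auto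
    qed
    moreover have "C \<subseteq> ?P" using gC fC by auto
    ultimately have "V1.span C \<subseteq> ?P" by (rule V1.span_minimal[rotated])
    then show ?thesis using spanC by auto
  qed
  have fth: "f d = \<theta> d" if d: "d \<in> D1" for d
  proof -
    let ?P = "{x \<in> D1. f x = \<theta> x}"
    have "V1.subspace ?P"
    proof (rule V1.subspaceI)
      show "0 \<in> ?P" using V1.subspace_0[OF sD1] f0 th0 by simp
    next
      fix x y assume "x \<in> ?P" "y \<in> ?P"
      then show "x + y \<in> ?P" using thh fadd V1.subspace_add[OF sD1] by auto
    next
      fix c x assume "x \<in> ?P"
      then show "sc1 c x \<in> ?P" using ths fsc V1.subspace_scale[OF sD1] by auto
    qed
    moreover have "B \<subseteq> ?P"
    proof
      fix b assume b: "b \<in> B"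
      then have "b \<in> C" "b \<in> D1" using B(1) C(1) by auto
      then show "b \<in> ?P" using fC unfolding g_def by simp
    qed
    ultimately have "V1.span B \<subseteq> ?P" by (rule V1.span_minimal[rotated])
    then show ?thesis using D1B d by auto
  qed
  have fbr: "f (br1 x y) = br2 (f x) (f y)" for x y
  proof -
    have inD: "br1 x y \<in> D1" unfolding D1_def derived_def by (rule V1.span_base) blast
    then have "f (br1 x y) = \<theta> (br1 x y)" by (rule fth)
    also have "\<dots> = br2 (f x) (f y)" using comp phif by blast
    finally show ?thesis .
  qed
  have finj: "inj f"
  proof (rule injI)
    fix x y assume "f x = f y"
    then have e: "f (x - y) = 0" using fdiff by simp
    then have "\<phi> (cL (x - y)) = \<phi> (cL 0)" using phif phi0 by simp
    then have "cL (x - y) = cL 0" using phib unfolding bij_betw_def inj_on_def by blast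
    then have "x - y \<in> Z1" using ceq1 by simp
    then have xy: "x - y \<in> D1" using Z1D by blast
    then have "\<theta> (x - y) = \<theta> 0" using fth e th0 by simp
    then have "x - y = 0" using thb xy V1.subspace_0[OF sD1] unfolding bij_betw_def inj_on_def by blast
    then show "x = y" by simp
  qed
  have fsurj: "surj f"
  proof -
    have "y \<in> range f" for y
    proof -
      have "cM y \<in> \<phi> ` range cL" using phib unfolding bij_betw_def by blast
      then obtain x where x: "\<phi> (cL x) = cM y" by blast
      then have "cM (f x) = cM y" using phif by simp
      then have "f x - y \<in> Z2" using ceq2 by simp
      then have "y - f x \<in> Z2" using center_neg[OF L2, of "f x - y"] unfolding Z2_def by simp
      then have "y - f x \<in> \<theta> ` D1" using Z2D thb unfolding bij_betw_def by blast
      then obtain d where d: "d \<in> D1" "y - f x = \<theta> d" by blast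
      then have "y = f (x + d)" using fth fadd by (simp add: algebra_simps)
      then show ?thesis by blast
    qed
    then show ?thesis by blast
  qed
  have fg: "f ` G1 i \<subseteq> G2 i" for i
  proof
    fix w assume "w \<in> f ` G1 i"
    then obtain x where x: "x \<in> G1 i" "w = f x" by blast
    let ?Ci = "C \<inter> G1 i" and ?Cj = "C \<inter> G1 (\<not> i)"
    have "C = ?Ci \<union> ?Cj" using C(2) unfolding H1_def by (cases i) auto
    then have "x \<in> V1.span (?Ci \<union> ?Cj)" using spanC by simp
    then obtain a b where ab: "a \<in> V1.span ?Ci" "b \<in> V1.span ?Cj" "x = a + b"
      unfolding V1.span_Un by blast
    have aG: "a \<in> G1 i" using ab(1) V1.span_minimal[of ?Ci "G1 i"] lsa_sub[OF L1] by blast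
    have bG: "b \<in> G1 (\<not> i)" using ab(2) V1.span_minimal[of ?Cj "G1 (\<not> i)"] lsa_sub[OF L1] by blast
    have "b = x - a" using ab by simp
    then have "b \<in> G1 i" using V1.subspace_diff[OF lsa_sub[OF L1] x(1) aG] by simp
    then have "b = 0" using bG lsa_inter[OF L1, of i "\<not> i"] by auto
    then have xa: "x = a" using ab by simp
    let ?P = "{x. f x \<in> G2 i}"
    have "V1.subspace ?P" using VP.linear_subspace_linear_preimage[OF fl lsa_sub[OF L2]] .
    moreover have "?Ci \<subseteq> ?P" using gC fC by auto
    ultimately have "V1.span ?Ci \<subseteq> ?P" by (rule V1.span_minimal[rotated])
    then show "w \<in> G2 i" using ab(1) xa x by auto
  qed
  show ?thesis unfolding lsa_isomorphic_def
    using finj fsurj fl fbr fg by (intro exI[of _ f]) (auto simp: bij_def)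
qed


theorem theorem3p6:
  fixes sc1 :: "'k::field \<Rightarrow> 'a::ab_group_add \<Rightarrow> 'a" and G1 :: "bool \<Rightarrow> 'a set"
    and br1 :: "'a \<Rightarrow> 'a \<Rightarrow> 'a"
    and sc2 :: "'k \<Rightarrow> 'b::ab_group_add \<Rightarrow> 'b" and G2 :: "bool \<Rightarrow> 'b set"
    and br2 :: "'b \<Rightarrow> 'b \<Rightarrow> 'b"
  assumes "(2::'k) \<noteq> 0" and "(3::'k) \<noteq> 0"
    and "lie_superalgebra sc1 G1 br1" and "fin_dim sc1" and "stem sc1 br1"
    and "lie_superalgebra sc2 G2 br2" and "fin_dim sc2" and "stem sc2 br2"
  shows "isoclinic sc1 G1 br1 sc2 G2 br2 \<longleftrightarrow> lsa_isomorphic sc1 G1 br1 sc2 G2 br2"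
  using fwd[OF assms(3,5,6,8)] bwd[OF assms(3,6)] by blast

end
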